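(* In the model described in the context, with $\tilde k(p)=(1+\theta)\big(1-(1-p)^c\big)$ for $c>1$ and $\theta\ge0$, the indemnity $I\equiv0$ is never optimal.
   Context: Let $X\ge0$ be a random variable with $\mathbb{P}(X=0)=1-q$, where $q\in(0,1]$, and with density $q\lambda e^{-\lambda x}$ on $(0,\infty)$, where $\lambda>0$. So $S_X(t)=qe^{-\lambda t}$ for $t\ge0$. $\mathcal{I}_c$ is the set of $I:[0,\infty)\to[0,\infty)$ with $0\le I(x)\le x$ and $0\le I(x)-I(y)\le x-y$ for $0\le y\le x$. For $Y\ge0$ with $S_Y(t)=\mathbb{P}(Y>t)$, the premium is $$\pi(Y)=\int_0^\infty\tilde k(S_Y(t))\,dt.$$ The buyer has wealth $w$ and utility $u$ with $u'(x)=e^{-\gamma x}$, $\gamma>0$. She chooses $I\in\mathcal{I}_c$ to maximize $\mathbb{E}[u(w-X+I(X)-\pi(I(X)))]$; the buyer's distortion is the identity. *)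

theory Defs
  imports "HOL-Analysis.Analysis"
begin

definition Ic :: "(real \<Rightarrow> real) set" where
  "Ic = {I. (\<forall>x. 0 \<le> x \<longrightarrow> 0 \<le> I x \<and> I x \<le> x) \<and>
           (\<forall>x y. 0 \<le> y \<and> y \<le> x \<longrightarrow> 0 \<le> I x - I y \<and> I x - I y \<le> x - y)}"

text \<open>Survival function of I(X), where P(X=0)=1-q and X has density q lam e^(-lam x) on (0,oo).\<close>
definition survI :: "real \<Rightarrow> real \<Rightarrow> (real \<Rightarrow> real) \<Rightarrow> real \<Rightarrow> real" where
  "survI q lam I t = (1 - q) * (if t < I 0 then 1 else 0)
      + (LINT x:{x. 0 < x \<and> t < I x}|lborel. q * lam * exp (- lam * x))"

definition premium :: "(real \<Rightarrow> real) \<Rightarrow> real \<Rightarrow> real \<Rightarrow> (real \<Rightarrow> real) \<Rightarrow> real" where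
  "premium ktil q lam I = (LINT t:{0..}|lborel. ktil (survI q lam I t))"

definition expectX :: "real \<Rightarrow> real \<Rightarrow> (real \<Rightarrow> real) \<Rightarrow> ereal" where
  "expectX q lam g =
     ereal ((1 - q) * g 0)
     + enn2ereal (\<integral>\<^sup>+ x. indicator {0<..} x * ennreal (q * lam * exp (- lam * x) * max (g x) 0) \<partial>lborel)
     - enn2ereal (\<integral>\<^sup>+ x. indicator {0<..} x * ennreal (q * lam * exp (- lam * x) * max (- g x) 0) \<partial>lborel)"

definition EU :: "(real \<Rightarrow> real) \<Rightarrow> real \<Rightarrow> (real \<Rightarrow> real) \<Rightarrow> real \<Rightarrow> real \<Rightarrow> (real \<Rightarrow> real) \<Rightarrow> ereal" where
  "EU u w ktil q lam I = expectX q lam (\<lambda>x. u (w - x + I x - premium ktil q lam I))"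

end

theory Submission
  imports Defs
begin

lemma nn_exp_Ici:
  fixes m a :: real assumes m: "0 < m"
  shows "(\<integral>\<^sup>+x. ennreal (indicator {a..} x * exp (- m * x)) \<partial>lborel) = ennreal (exp (- m * a) / m)"
proof (rule nn_integral_has_integral_lborel)
  show "(\<lambda>x. indicator {a..} x * exp (- m * x)) \<in> borel_measurable borel" by measurable
  show "0 \<le> indicator {a..} x * exp (- m * x)" for x by auto
  have "((\<lambda>x. if x \<in> {a..} then exp (- m * x) else 0) has_integral (exp (- m * a) / m)) UNIV"
    unfolding has_integral_restrict_UNIV
    using has_integral_exp_minus_to_infinity[OF m, of a] by simp
  moreover have "(\<lambda>x. indicator {a..} x * exp (- m * x)) = (\<lambda>x. if x \<in> {a..} then exp (- m * x) else 0)"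
    by (auto simp: indicator_def fun_eq_iff)
  ultimately show "((\<lambda>x. indicator {a..} x * exp (- m * x)) has_integral (exp (- m * a) / m)) UNIV"
    by simp
qed

lemma nn_exp_Ioi:
  fixes m a :: real assumes m: "0 < m"
  shows "(\<integral>\<^sup>+x. indicator {a<..} x * ennreal (exp (- m * x)) \<partial>lborel) = ennreal (exp (- m * a) / m)"
proof -
  have "(\<integral>\<^sup>+x. indicator {a<..} x * ennreal (exp (- m * x)) \<partial>lborel)
      = (\<integral>\<^sup>+x. ennreal (indicator {a..} x * exp (- m * x)) \<partial>lborel)"
    apply (rule nn_integral_cong_AE)
    using AE_lborel_singleton[of a]
    by eventually_elim (auto simp: indicator_def)
  then show ?thesis using nn_exp_Ici[OF m] by simp
qed

lemma nn_rho_const: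
  fixes q lam k b :: real assumes "0 \<le> q" "0 < lam" "0 \<le> k"
  shows "(\<integral>\<^sup>+x. indicator {b<..} x * ennreal (q * lam * exp (- lam * x) * k) \<partial>lborel)
       = ennreal (q * k * exp (- lam * b))"
proof -
  have "(\<integral>\<^sup>+x. indicator {b<..} x * ennreal (q * lam * exp (- lam * x) * k) \<partial>lborel)
     = (\<integral>\<^sup>+x. ennreal (q * lam * k) * (indicator {b<..} x * ennreal (exp (- lam * x))) \<partial>lborel)"
    using assms by (intro nn_integral_cong) (auto simp: indicator_def ennreal_mult[symmetric] mult_ac)
  also have "\<dots> = ennreal (q * lam * k) * (\<integral>\<^sup>+x. indicator {b<..} x * ennreal (exp (- lam * x)) \<partial>lborel)"
    by (rule nn_integral_cmult) auto
  also have "\<dots> = ennreal (q * lam * k) * ennreal (exp (- lam * b) / lam)"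
    by (simp only: nn_exp_Ioi[OF assms(2)])
  also have "\<dots> = ennreal (q * k * exp (- lam * b))"
    using assms by (simp add: ennreal_mult[symmetric])
  finally show ?thesis .
qed

lemma lint_rho:
  fixes q lam b :: real assumes "0 \<le> q" "0 < lam"
  shows "(LINT x:{b<..}|lborel. q * lam * exp (- lam * x)) = q * exp (- lam * b)"
proof -
  have "(LINT x:{b<..}|lborel. q * lam * exp (- lam * x))
      = enn2real (\<integral>\<^sup>+x. ennreal (indicator {b<..} x *\<^sub>R (q * lam * exp (- lam * x))) \<partial>lborel)"
    unfolding set_lebesgue_integral_def
    using assms by (intro integral_eq_nn_integral) auto
  also have "(\<integral>\<^sup>+x. ennreal (indicator {b<..} x *\<^sub>R (q * lam * exp (- lam * x))) \<partial>lborel)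
     = (\<integral>\<^sup>+x. indicator {b<..} x * ennreal (q * lam * exp (- lam * x) * 1) \<partial>lborel)"
    by (intro nn_integral_cong) (auto simp: indicator_def)
  also have "\<dots> = ennreal (q * 1 * exp (- lam * b))"
    using assms by (intro nn_rho_const) auto
  finally show ?thesis using assms by simp
qed

lemma ktil_bound:
  fixes s c theta :: real assumes "0 \<le> s" "s \<le> 1" "1 \<le> c" "0 \<le> theta"
  shows "0 \<le> (1 + theta) * (1 - (1 - s) powr c)" and "(1 + theta) * (1 - (1 - s) powr c) \<le> (1 + theta) * c * s"
proof -
  have "(1 - s) powr c \<le> 1"
    using assms by (intro powr_le1) auto
  then show "0 \<le> (1 + theta) * (1 - (1 - s) powr c)" using assms by auto
  have "1 - (1 - s) powr c \<le> c * s"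
  proof (cases "s = 1")
    case True then show ?thesis using assms by simp
  next
    case False
    show ?thesis
    proof (cases "s = 0")
      case True then show ?thesis by simp
    next
      case False
      with \<open>s \<noteq> 1\<close> assms have s: "0 < s" "s < 1" by auto
      have "\<exists>z>1 - s. z < 1 \<and> 1 powr c - (1 - s) powr c = (1 - (1 - s)) * (c * z powr (c - 1))"
        apply (rule MVT2)
        using s by (auto intro!: derivative_eq_intros)
      then obtain z where z: "1 - s < z" "z < 1" "1 powr c - (1 - s) powr c = s * (c * z powr (c - 1))"
        by auto
      have "z powr (c - 1) \<le> 1" using z s assms by (intro powr_le1) auto
      then have "s * (c * z powr (c - 1)) \<le> s * c" using s assms
        by (intro mult_left_mono) (auto simp: mult_le_cancel_left1)
      then show ?thesis using z by (simp add: mult_ac)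
    qed
  qed
  then show "(1 + theta) * (1 - (1 - s) powr c) \<le> (1 + theta) * c * s"
    using assms mult_left_mono[of "1 - (1 - s) powr c" "c * s" "1 + theta"] by (simp add: mult_ac)
qed

lemma expectX_bounded:
  fixes q lam a :: real and g :: "real \<Rightarrow> real"
  assumes q: "0 \<le> q" and lam: "0 < lam" and gm[measurable]: "g \<in> borel_measurable borel"
    and ga: "\<And>x. 0 < x \<Longrightarrow> g x \<le> a"
  shows "expectX q lam g = ereal ((1 - q) * g 0 + q * a)
     - enn2ereal (\<integral>\<^sup>+x. indicator {0<..} x * ennreal (q * lam * exp (- lam * x) * (a - g x)) \<partial>lborel)"
proof -
  define P where "P = (\<integral>\<^sup>+x. indicator {0<..} x * ennreal (q * lam * exp (- lam * x) * max (g x) 0) \<partial>lborel)"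
  define N where "N = (\<integral>\<^sup>+x. indicator {0<..} x * ennreal (q * lam * exp (- lam * x) * max (- g x) 0) \<partial>lborel)"
  define H where "H = (\<integral>\<^sup>+x. indicator {0<..} x * ennreal (q * lam * exp (- lam * x) * (a - g x)) \<partial>lborel)"
  define Q1 where "Q1 = (\<integral>\<^sup>+x. indicator {0<..} x * ennreal (q * lam * exp (- lam * x) * max a 0) \<partial>lborel)"
  define Q2 where "Q2 = (\<integral>\<^sup>+x. indicator {0<..} x * ennreal (q * lam * exp (- lam * x) * max (- a) 0) \<partial>lborel)"
  have Q1: "Q1 = ennreal (q * max a 0)" unfolding Q1_def using nn_rho_const[of q lam "max a 0" 0] q lam by simp
  have Q2: "Q2 = ennreal (q * max (- a) 0)" unfolding Q2_def using nn_rho_const[of q lam "max (- a) 0" 0] q lam by simp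
  have pw: "indicator {0<..} x * ennreal (q * lam * exp (- lam * x) * max (g x) 0)
        + indicator {0<..} x * ennreal (q * lam * exp (- lam * x) * (a - g x))
        + indicator {0<..} x * ennreal (q * lam * exp (- lam * x) * max (- a) 0)
      = indicator {0<..} x * ennreal (q * lam * exp (- lam * x) * max (- g x) 0)
        + indicator {0<..} x * ennreal (q * lam * exp (- lam * x) * max a 0)" for x
  proof (cases "0 < x")
    case True
    define r where "r = q * lam * exp (- lam * x)"
    have r: "0 \<le> r" unfolding r_def using q lam by auto
    have ga': "g x \<le> a" using ga True by auto
    have e: "r * max (g x) 0 + r * (a - g x) + r * max (- a) 0 = r * max (- g x) 0 + r * max a 0"
    proof -
      have "max (g x) 0 + (a - g x) + max (- a) 0 = max (- g x) 0 + max a 0"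
        using ga' by (auto simp: max_def)
      then show ?thesis by (metis distrib_left)
    qed
    have "ennreal (r * max (g x) 0) + ennreal (r * (a - g x)) + ennreal (r * max (- a) 0)
        = ennreal (r * max (- g x) 0) + ennreal (r * max a 0)"
      using r ga' by (simp add: ennreal_plus[symmetric] e del: ennreal_plus)
    then show ?thesis using True by (simp add: r_def)
  qed (simp)
  have sum: "P + H + Q2 = N + Q1"
  proof -
    have "P + H + Q2 = (\<integral>\<^sup>+x. indicator {0<..} x * ennreal (q * lam * exp (- lam * x) * max (g x) 0)
        + indicator {0<..} x * ennreal (q * lam * exp (- lam * x) * (a - g x))
        + indicator {0<..} x * ennreal (q * lam * exp (- lam * x) * max (- a) 0) \<partial>lborel)"
      unfolding P_def H_def Q2_def by (simp add: nn_integral_add)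
    also have "\<dots> = (\<integral>\<^sup>+x. indicator {0<..} x * ennreal (q * lam * exp (- lam * x) * max (- g x) 0)
        + indicator {0<..} x * ennreal (q * lam * exp (- lam * x) * max a 0) \<partial>lborel)"
      by (simp only: pw)
    also have "\<dots> = N + Q1"
      unfolding N_def Q1_def by (simp add: nn_integral_add)
    finally show ?thesis .
  qed
  have gmax: "g x \<le> max a 0" if "0 < x" for x using ga[OF that] by simp
  have "P \<le> Q1" unfolding P_def Q1_def
    using q lam gmax by (intro nn_integral_mono) (auto simp: indicator_def intro!: ennreal_leI mult_left_mono)
  then have Pfin: "P < top" using Q1 by (simp add: order_le_less_trans)
  then obtain p where p: "P = ennreal p" "0 \<le> p" by (cases P) auto
  have ex: "expectX q lam g = ereal ((1 - q) * g 0) + enn2ereal P - enn2ereal N"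
    unfolding expectX_def P_def N_def by simp
  show ?thesis
  proof (cases "H = top")
    case True
    then have "N + Q1 = top" using sum by simp
    then have "N = top" using Q1 by simp
    then show ?thesis unfolding ex H_def[symmetric] using True p by simp
  next
    case False
    then obtain h where h: "H = ennreal h" "0 \<le> h" by (cases H) auto
    have "N \<le> N + Q1" by simp
    also have "\<dots> < top" using sum p h Q2 by (simp flip: sum)
    finally obtain n where n: "N = ennreal n" "0 \<le> n" by (cases N) auto
    have "ennreal (p + h + q * max (- a) 0) = ennreal (n + q * max a 0)"
      using sum p h n Q1 Q2 q by (simp add: ennreal_plus[symmetric] del: ennreal_plus)
    then have "p + h + q * max (- a) 0 = n + q * max a 0"
      using p h n q by (subst (asm) ennreal_inj) auto
    moreover have "q * max a 0 - q * max (- a) 0 = q * a" by (auto simp: max_def)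
    ultimately show ?thesis unfolding ex H_def[symmetric] using p h n by simp
  qed
qed

lemma exp_minus_one_le: "exp y - 1 \<le> y * exp (y::real)"
proof -
  have "1 - y \<le> exp (- y)" using exp_ge_add_one_self[of "- y"] by simp
  then have "(1 - y) * exp y \<le> exp (- y) * exp y" by (intro mult_right_mono) auto
  then show ?thesis by (simp add: exp_minus_inverse algebra_simps)
qed

lemma final_arith:
  fixes E q gamma lam jd dd d p beta A :: real
  assumes E: "0 < E" and q: "0 < q" "q \<le> 1" and g: "0 < gamma" "gamma < lam"
    and jd: "0 \<le> jd" and s1: "jd + dd = q * lam * E / (lam - gamma)"
    and s2: "dd + q * (E * exp (gamma * d)) * exp (- lam * d) = q * lam * E * (exp (- (lam - gamma) * d) / (lam - gamma))"
    and p: "p \<le> beta * exp (- lam * d)" and d: "0 \<le> d" and beta: "0 < beta"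
    and A: "A = 1 + q * lam / (lam - gamma)"
    and ed: "exp (gamma * d) = A * beta * exp (gamma * beta) * (lam - gamma) / q + 1"
  shows "(exp (gamma * p) - 1) * ((1 - q) * E + jd) < dd"
proof -
  define mu where "mu = lam - gamma"
  have mu: "0 < mu" using g by (simp add: mu_def)
  have em: "exp (- mu * d) = exp (- lam * d) * exp (gamma * d)"
    by (simp add: mu_def exp_add[symmetric] algebra_simps)
  have dd: "dd = q * E * exp (- lam * d) * exp (gamma * d) * gamma / mu"
  proof -
    have "dd = q * lam * E * (exp (- mu * d) / mu) - q * (E * exp (gamma * d)) * exp (- lam * d)"
      using s2 by (simp add: mu_def)
    also have "\<dots> = q * lam * E * (exp (- lam * d) * exp (gamma * d) / mu) - q * (E * exp (gamma * d)) * exp (- lam * d)"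
      by (simp only: em)
    also have "\<dots> = q * E * exp (- lam * d) * exp (gamma * d) * (lam / mu - 1)"
      using mu by (simp add: field_simps)
    also have "lam / mu - 1 = gamma / mu" using mu by (simp add: field_simps mu_def)
    finally show ?thesis by simp
  qed
  have ddpos: "0 < dd" unfolding dd using E q g mu by auto
  have jq: "jd \<le> q * lam * E / mu" using s1 ddpos by (simp add: mu_def)
  have EA: "E * A = E + q * lam * E / mu" using mu by (simp add: A mu_def[symmetric] field_simps)
  have qE: "0 < q * E" using E q by simp
  have qE2: "(1 - q) * E = E - q * E" by (simp add: algebra_simps)
  have B: "(1 - q) * E + jd \<le> E * A" using jq EA qE qE2 by linarith
  have B0: "0 \<le> (1 - q) * E + jd" using E q jd by auto
  show ?thesis
  proof (cases "p \<le> 0")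
    case True
    then have "exp (gamma * p) \<le> 1" using g by (simp add: mult_nonneg_nonpos)
    then have "(exp (gamma * p) - 1) * ((1 - q) * E + jd) \<le> 0"
      using B0 by (simp add: mult_nonpos_nonneg)
    then show ?thesis using ddpos by linarith
  next
    case False
    have el: "exp (- lam * d) \<le> 1" using g d by simp
    have pb: "p \<le> beta" using p el beta by (smt (verit) mult_left_le)
    have "exp (gamma * p) - 1 \<le> gamma * p * exp (gamma * p)" using exp_minus_one_le[of "gamma * p"] .
    also have "\<dots> \<le> gamma * (beta * exp (- lam * d)) * exp (gamma * beta)"
      using False g p pb by (intro mult_mono) auto
    finally have e1: "exp (gamma * p) - 1 \<le> gamma * beta * exp (- lam * d) * exp (gamma * beta)" by (simp add: mult_ac)
    have "(exp (gamma * p) - 1) * ((1 - q) * E + jd) \<le> gamma * beta * exp (- lam * d) * exp (gamma * beta) * (E * A)"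
      using e1 B B0 g beta by (intro mult_mono) auto
    also have "\<dots> < dd"
    proof -
      have "0 < q * lam / (lam - gamma)" using q g by (intro divide_pos_pos) auto
      then have Apos: "0 < A" using A by linarith
      have "A * beta * exp (gamma * beta) * mu < q * exp (gamma * d)"
        using ed q by (simp add: mu_def field_simps)
      then have "(gamma * E * exp (- lam * d) / mu) * (A * beta * exp (gamma * beta) * mu)
          < (gamma * E * exp (- lam * d) / mu) * (q * exp (gamma * d))"
        using g E mu by (intro mult_strict_left_mono) auto
      then show ?thesis unfolding dd using mu by (simp add: field_simps)
    qed
    finally show ?thesis .
  qed
qed

lemma survI_sl:
  fixes q lam d t :: real assumes "0 \<le> q" "0 < lam" "0 \<le> d" "0 \<le> t"
  shows "survI q lam (\<lambda>x. max (x - d) 0) t = q * exp (- lam * (t + d))"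
proof -
  have "{x. 0 < x \<and> t < max (x - d) 0} = {t + d<..}" using assms by auto
  then show ?thesis unfolding survI_def using assms lint_rho[of q lam "t + d"] by simp
qed

lemma premium_sl:
  fixes q lam d c theta :: real assumes q: "0 \<le> q" "q \<le> 1" and lam: "0 < lam" and d: "0 \<le> d"
    and c: "1 \<le> c" and th: "0 \<le> theta"
  shows "premium (\<lambda>p. (1 + theta) * (1 - (1 - p) powr c)) q lam (\<lambda>x. max (x - d) 0)
     \<le> (1 + theta) * c * q * exp (- lam * d) / lam"
proof -
  define kt where "kt = (\<lambda>p::real. (1 + theta) * (1 - (1 - p) powr c))"
  define B where "B = (1 + theta) * c * q * exp (- lam * d)"
  have B0: "0 \<le> B" unfolding B_def using q c th by auto
  have s01: "0 \<le> q * exp (- lam * (t + d))" "q * exp (- lam * (t + d)) \<le> 1" if "0 \<le> t" for t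
  proof -
    show "0 \<le> q * exp (- lam * (t + d))" using q by simp
    have "exp (- lam * (t + d)) \<le> 1" using lam d that by simp
    then show "q * exp (- lam * (t + d)) \<le> 1" using q
      by (metis mult_le_one exp_ge_zero)
  qed
  have "premium kt q lam (\<lambda>x. max (x - d) 0) = (LINT t:{0..}|lborel. kt (q * exp (- lam * (t + d))))"
    unfolding premium_def by (intro set_lebesgue_integral_cong) (auto simp: survI_sl q lam d)
  also have "\<dots> = enn2real (\<integral>\<^sup>+t. ennreal (indicator {0..} t *\<^sub>R kt (q * exp (- lam * (t + d)))) \<partial>lborel)"
    unfolding set_lebesgue_integral_def
  proof (intro integral_eq_nn_integral)
    show "(\<lambda>t. indicat_real {0..} t *\<^sub>R kt (q * exp (- lam * (t + d)))) \<in> borel_measurable lborel"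
      unfolding kt_def by measurable
    show "AE t in lborel. 0 \<le> indicat_real {0..} t *\<^sub>R kt (q * exp (- lam * (t + d)))"
      using s01 c th by (auto simp: indicator_def kt_def intro!: ktil_bound(1))
  qed
  also have "\<dots> \<le> enn2real (\<integral>\<^sup>+t. ennreal B * ennreal (indicator {0..} t * exp (- lam * t)) \<partial>lborel)"
  proof (intro enn2real_mono)
    show "(\<integral>\<^sup>+t. ennreal (indicator {0..} t *\<^sub>R kt (q * exp (- lam * (t + d)))) \<partial>lborel)
        \<le> (\<integral>\<^sup>+t. ennreal B * ennreal (indicator {0..} t * exp (- lam * t)) \<partial>lborel)"
    proof (intro nn_integral_mono)
      fix t :: real
      show "ennreal (indicator {0..} t *\<^sub>R kt (q * exp (- lam * (t + d))))
          \<le> ennreal B * ennreal (indicator {0..} t * exp (- lam * t))"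
      proof (cases "0 \<le> t")
        case True
        have "kt (q * exp (- lam * (t + d))) \<le> (1 + theta) * c * (q * exp (- lam * (t + d)))"
          unfolding kt_def using s01[OF True] c th by (intro ktil_bound(2)) auto
        also have "\<dots> = B * exp (- lam * t)" unfolding B_def
          by (simp add: exp_add[symmetric] algebra_simps)
        finally show ?thesis using True B0 by (simp add: ennreal_mult[symmetric] ennreal_leI)
      qed simp
    qed
    have "(\<integral>\<^sup>+t. ennreal B * ennreal (indicator {0..} t * exp (- lam * t)) \<partial>lborel)
        = ennreal B * (\<integral>\<^sup>+t. ennreal (indicator {0..} t * exp (- lam * t)) \<partial>lborel)"
      by (rule nn_integral_cmult) auto
    also have "\<dots> = ennreal B * ennreal (exp (- lam * 0) / lam)"
      by (simp only: nn_exp_Ici[OF lam])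
    finally have eq: "(\<integral>\<^sup>+t. ennreal B * ennreal (indicator {0..} t * exp (- lam * t)) \<partial>lborel)
        = ennreal (B / lam)" using B0 lam by (simp add: ennreal_mult[symmetric])
    then show "(\<integral>\<^sup>+t. ennreal B * ennreal (indicator {0..} t * exp (- lam * t)) \<partial>lborel) < top"
      by simp
  qed
  also have "(\<integral>\<^sup>+t. ennreal B * ennreal (indicator {0..} t * exp (- lam * t)) \<partial>lborel)
        = ennreal B * (\<integral>\<^sup>+t. ennreal (indicator {0..} t * exp (- lam * t)) \<partial>lborel)"
      by (rule nn_integral_cmult) auto
  also have "\<dots> = ennreal B * ennreal (exp (- lam * 0) / lam)"
    by (simp only: nn_exp_Ici[OF lam])
  also have "enn2real \<dots> = B / lam" using B0 lam by (simp add: ennreal_mult[symmetric])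
  finally show ?thesis unfolding kt_def B_def .
qed

lemma EU_form:
  fixes u kt I :: "real \<Rightarrow> real" and K gamma w q lam :: real
  assumes u_eq: "\<And>y. u y = K - exp (- gamma * y) / gamma" and g: "0 < gamma" and q: "0 \<le> q"
    and lam: "0 < lam" and I[measurable]: "I \<in> borel_measurable borel"
  shows "EU u w kt q lam I = ereal ((1 - q) * (K - exp (- gamma * (w + I 0 - premium kt q lam I)) / gamma) + q * K)
    - enn2ereal (\<integral>\<^sup>+x. indicator {0<..} x * ennreal (q * lam * exp (- lam * x)
        * (exp (- gamma * (w - x + I x - premium kt q lam I)) / gamma)) \<partial>lborel)"
proof -
  define p where "p = premium kt q lam I"
  have "EU u w kt q lam I = expectX q lam (\<lambda>x. K - exp (- gamma * (w - x + I x - p)) / gamma)"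
    unfolding EU_def p_def u_eq ..
  also have "\<dots> = ereal ((1 - q) * (K - exp (- gamma * (w - 0 + I 0 - p)) / gamma) + q * K)
     - enn2ereal (\<integral>\<^sup>+x. indicator {0<..} x * ennreal (q * lam * exp (- lam * x)
        * (K - (K - exp (- gamma * (w - x + I x - p)) / gamma))) \<partial>lborel)"
    by (rule expectX_bounded) (use g q lam in auto)
  finally show ?thesis unfolding p_def by simp
qed

lemma emeasure_Ioi_top: "emeasure lborel {0::real<..} = top"
proof -
  have n: "ennreal (real n) \<le> emeasure lborel {0::real<..}" for n
  proof -
    have "emeasure lborel {0::real<..<real n} \<le> emeasure lborel {0::real<..}"
      by (intro emeasure_mono) auto
    then show ?thesis by simp
  qed
  show ?thesis
  proof (rule ccontr)
    assume "emeasure lborel {0::real<..} \<noteq> top"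
    then obtain r where r: "emeasure lborel {0::real<..} = ennreal r" "0 \<le> r"
      by (cases "emeasure lborel {0::real<..}") auto
    have "ennreal (real (nat (ceiling r) + 1)) \<le> ennreal r" using n[of "nat (ceiling r) + 1"] unfolding r(1) .
    then have "real (nat (ceiling r) + 1) \<le> r" using ennreal_le_iff[OF r(2)] by blast
    moreover have "r \<le> real (nat (ceiling r))" by linarith
    ultimately show False by simp
  qed
qed

theorem proposition4p3:
  fixes q lam gamma c theta w :: real and u :: "real \<Rightarrow> real"
  assumes "0 < q" and "q \<le> 1" and "0 < lam" and "0 < gamma"
    and "1 < c" and "0 \<le> theta"
    and "\<And>x. (u has_real_derivative exp (- gamma * x)) (at x)"
  shows "\<exists>I\<in>Ic. EU u w (\<lambda>p. (1 + theta) * (1 - (1 - p) powr c)) q lam (\<lambda>x. 0)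
               < EU u w (\<lambda>p. (1 + theta) * (1 - (1 - p) powr c)) q lam I"
proof -
  note q = assms(1,2) and lam = assms(3) and g = assms(4) and c = assms(5) and th = assms(6)
  define kt where "kt = (\<lambda>p::real. (1 + theta) * (1 - (1 - p) powr c))"
  define K where "K = u 0 + 1 / gamma"
  have u_eq: "u y = K - exp (- gamma * y) / gamma" for y
  proof -
    define f where "f = (\<lambda>y. u y + exp (- gamma * y) / gamma)"
    have "\<forall>x. DERIV f x :> 0"
    proof
      fix x
      have d2: "((\<lambda>y. exp (- gamma * y) / gamma) has_real_derivative (- exp (- gamma * x))) (at x)"
        using g by (auto intro!: derivative_eq_intros)
      have "DERIV f x :> exp (- gamma * x) + (- exp (- gamma * x))"
        unfolding f_def by (rule DERIV_add[OF assms(7) d2])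
      then show "DERIV f x :> 0" by simp
    qed
    then have "f y = f 0" by (rule DERIV_isconst_all)
    then show ?thesis using g by (simp add: f_def K_def)
  qed
  have p0: "premium kt q lam (\<lambda>x. 0) = 0"
  proof -
    have "(\<lambda>t. indicator {0..} t *\<^sub>R kt (survI q lam (\<lambda>x. 0) t)) = (\<lambda>t::real. 0::real)"
      by (auto simp: survI_def kt_def indicator_def fun_eq_iff set_lebesgue_integral_def)
    then show ?thesis unfolding premium_def set_lebesgue_integral_def by simp
  qed
  define E where "E = exp (- gamma * w) / gamma"
  have Epos: "0 < E" unfolding E_def using g by simp
  define H0 where "H0 = (\<integral>\<^sup>+x. indicator {0<..} x * ennreal (q * lam * exp (- lam * x) * (exp (- gamma * (w - x)) / gamma)) \<partial>lborel)"
  have EU0: "EU u w kt q lam (\<lambda>x. 0) = ereal ((1 - q) * (K - E) + q * K) - enn2ereal H0"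
    using EU_form[of u K gamma q lam "\<lambda>x. 0" w kt, OF u_eq g _ lam] q p0 by (simp add: E_def H0_def)
  show ?thesis
  proof (cases "lam \<le> gamma")
    case True
    define I where "I = (\<lambda>x::real. x)"
    have IIc: "I \<in> Ic" unfolding Ic_def I_def by auto
    define p where "p = premium kt q lam I"
    have H1: "(\<integral>\<^sup>+x. indicator {0<..} x * ennreal (q * lam * exp (- lam * x)
        * (exp (- gamma * (w - x + I x - p)) / gamma)) \<partial>lborel) = ennreal (q * (exp (- gamma * (w - p)) / gamma) * exp (- lam * 0))"
    proof -
      have "(\<integral>\<^sup>+x. indicator {0<..} x * ennreal (q * lam * exp (- lam * x)
        * (exp (- gamma * (w - x + I x - p)) / gamma)) \<partial>lborel)
        = (\<integral>\<^sup>+x. indicator {0<..} x * ennreal (q * lam * exp (- lam * x)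
        * (exp (- gamma * (w - p)) / gamma)) \<partial>lborel)" by (simp add: I_def)
      also have "\<dots> = ennreal (q * (exp (- gamma * (w - p)) / gamma) * exp (- lam * 0))"
        by (rule nn_rho_const) (use q lam g in auto)
      finally show ?thesis .
    qed
    have EU1: "EU u w kt q lam I = ereal ((1 - q) * (K - exp (- gamma * (w + I 0 - p)) / gamma) + q * K)
        - ereal (q * (exp (- gamma * (w - p)) / gamma))"
      using EU_form[of u K gamma q lam I w kt, OF u_eq g _ lam] q g H1 unfolding p_def[symmetric]
      by (simp add: I_def enn2ereal_ennreal)
    have "H0 = top"
    proof -
      have "(\<integral>\<^sup>+x. ennreal (q * lam * E) * indicator {0<..} (x::real) \<partial>lborel) \<le> H0"
        unfolding H0_def
      proof (rule nn_integral_mono)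
        fix x :: real
        show "ennreal (q * lam * E) * indicator {0<..} (x::real)
          \<le> indicator {0<..} x * ennreal (q * lam * exp (- lam * x) * (exp (- gamma * (w - x)) / gamma))"
        proof (cases "0 < x")
          case xp: True
          have "1 \<le> exp ((gamma - lam) * x)" using True xp by simp
          then have "q * lam * E * 1 \<le> q * lam * E * exp ((gamma - lam) * x)"
            using q lam Epos by (intro mult_left_mono) auto
          also have "\<dots> = q * lam * exp (- lam * x) * (exp (- gamma * (w - x)) / gamma)"
            unfolding E_def by (simp add: mult_exp_exp algebra_simps)
          finally show ?thesis using xp by (simp add: ennreal_leI)
        qed simp
      qed
      moreover have "(\<integral>\<^sup>+x. ennreal (q * lam * E) * indicator {0<..} (x::real) \<partial>lborel) = top"
        using q lam Epos by (simp add: nn_integral_cmult_indicator emeasure_Ioi_top ennreal_mult_top)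
      ultimately show ?thesis using top.extremum_unique by metis
    qed
    then have "EU u w kt q lam (\<lambda>x. 0) < EU u w kt q lam I" unfolding EU0 EU1 by simp
    then show ?thesis using IIc unfolding kt_def by blast
  next
    case False
    then have gl: "gamma < lam" by simp
    define mu where "mu = lam - gamma"
    have mu: "0 < mu" using gl by (simp add: mu_def)
    define A where "A = 1 + q * lam / (lam - gamma)"
    define beta where "beta = (1 + theta) * c * q / lam"
    have beta: "0 < beta" unfolding beta_def using q lam c th by auto
    define M where "M = A * beta * exp (gamma * beta) * (lam - gamma) / q"
    have Apos: "0 < A" unfolding A_def using q lam gl by (simp add: add_pos_nonneg)
    have Mpos: "0 < M" unfolding M_def using Apos beta gl q by simp
    define d where "d = ln (M + 1) / gamma"
    have d: "0 < d" unfolding d_def using Mpos g by simp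
    have ed: "exp (gamma * d) = M + 1" unfolding d_def using g Mpos by simp
    define I where "I = (\<lambda>x::real. max (x - d) 0)"
    have IIc: "I \<in> Ic" unfolding Ic_def I_def using d by auto
    have I0: "I 0 = 0" unfolding I_def using d by simp
    define p where "p = premium kt q lam I"
    have pb: "p \<le> beta * exp (- lam * d)"
    proof -
      have "p \<le> (1 + theta) * c * q * exp (- lam * d) / lam"
        unfolding p_def kt_def I_def using premium_sl[of q lam d c theta] q lam d c th by simp
      also have "\<dots> = beta * exp (- lam * d)" unfolding beta_def by simp
      finally show ?thesis .
    qed
    define HI where "HI = (\<integral>\<^sup>+x. indicator {0<..} x * ennreal (q * lam * exp (- lam * x)
        * (exp (- gamma * (w - x + I x - p)) / gamma)) \<partial>lborel)"
    have EUI: "EU u w kt q lam I = ereal ((1 - q) * (K - E * exp (gamma * p)) + q * K) - enn2ereal HI"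
    proof -
      have "exp (- gamma * (w + I 0 - p)) / gamma = E * exp (gamma * p)"
        unfolding E_def I0 by (simp add: mult_exp_exp algebra_simps)
      then show ?thesis
        using EU_form[of u K gamma q lam I w kt, OF u_eq g _ lam] q
        unfolding p_def[symmetric] HI_def[symmetric] I_def[symmetric] by (simp add: I_def)
    qed
    define rE where "rE = (\<lambda>x::real. q * lam * exp (- lam * x) * E)"
    have rE0: "0 \<le> rE x" for x unfolding rE_def using q lam Epos by simp
    define Jd where "Jd = (\<integral>\<^sup>+x. indicator {0<..} x * ennreal (rE x * exp (gamma * min x d)) \<partial>lborel)"
    define D where "D = (\<integral>\<^sup>+x. indicator {d<..} x * ennreal (rE x * (exp (gamma * x) - exp (gamma * d))) \<partial>lborel)"
    have Rb: "(\<integral>\<^sup>+x. indicator {b<..} x * ennreal (rE x * exp (gamma * x)) \<partial>lborel)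
        = ennreal (q * lam * E * (exp (- (lam - gamma) * b) / (lam - gamma)))" for b
    proof -
      have "(\<integral>\<^sup>+x. indicator {b<..} x * ennreal (rE x * exp (gamma * x)) \<partial>lborel)
          = (\<integral>\<^sup>+x. ennreal (q * lam * E) * (indicator {b<..} x * ennreal (exp (- (lam - gamma) * x))) \<partial>lborel)"
      proof (intro nn_integral_cong)
        fix x :: real
        have "rE x * exp (gamma * x) = (q * lam * E) * exp (- (lam - gamma) * x)"
          unfolding rE_def by (simp add: mult_exp_exp algebra_simps)
        then show "indicator {b<..} x * ennreal (rE x * exp (gamma * x))
          = ennreal (q * lam * E) * (indicator {b<..} x * ennreal (exp (- (lam - gamma) * x)))"
          using q lam Epos by (simp add: ennreal_mult mult_ac)
      qed
      also have "\<dots> = ennreal (q * lam * E) * (\<integral>\<^sup>+x. indicator {b<..} x * ennreal (exp (- (lam - gamma) * x)) \<partial>lborel)"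
        by (rule nn_integral_cmult) auto
      also have "\<dots> = ennreal (q * lam * E) * ennreal (exp (- (lam - gamma) * b) / (lam - gamma))"
        using nn_exp_Ioi[of "lam - gamma" b] gl by simp
      also have "\<dots> = ennreal (q * lam * E * (exp (- (lam - gamma) * b) / (lam - gamma)))"
        using q lam Epos gl by (subst ennreal_mult[symmetric]) auto
      finally show ?thesis .
    qed
    have H0eq: "H0 = (\<integral>\<^sup>+x. indicator {0<..} x * ennreal (rE x * exp (gamma * x)) \<partial>lborel)"
      unfolding H0_def
    proof (intro nn_integral_cong)
      fix x :: real
      have "q * lam * exp (- lam * x) * (exp (- gamma * (w - x)) / gamma) = rE x * exp (gamma * x)"
        unfolding rE_def E_def by (simp add: mult_exp_exp algebra_simps)
      then show "indicator {0<..} x * ennreal (q * lam * exp (- lam * x) * (exp (- gamma * (w - x)) / gamma))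
          = indicator {0<..} x * ennreal (rE x * exp (gamma * x))" by simp
    qed
    have H0v: "H0 = ennreal (q * lam * E / (lam - gamma))"
      unfolding H0eq Rb by simp
    have H0split: "H0 = Jd + D"
    proof -
      have "H0 = (\<integral>\<^sup>+x. indicator {0<..} x * ennreal (rE x * exp (gamma * min x d))
          + indicator {d<..} x * ennreal (rE x * (exp (gamma * x) - exp (gamma * d))) \<partial>lborel)"
        unfolding H0eq
      proof (intro nn_integral_cong)
        fix x :: real
        show "indicator {0<..} x * ennreal (rE x * exp (gamma * x))
          = indicator {0<..} x * ennreal (rE x * exp (gamma * min x d))
          + indicator {d<..} x * ennreal (rE x * (exp (gamma * x) - exp (gamma * d)))"
        proof (cases "d < x")
          case True
          have "0 \<le> rE x * (exp (gamma * x) - exp (gamma * d))"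
            using rE0[of x] True g by (intro mult_nonneg_nonneg) auto
          then have "ennreal (rE x * exp (gamma * d)) + ennreal (rE x * (exp (gamma * x) - exp (gamma * d)))
              = ennreal (rE x * exp (gamma * x))"
            using rE0[of x] g by (simp add: ennreal_plus[symmetric] algebra_simps del: ennreal_plus)
          then show ?thesis using True d by (simp add: min_def)
        next
          case False
          then show ?thesis by (simp add: min_def indicator_def)
        qed
      qed
      also have "\<dots> = Jd + D" unfolding Jd_def D_def rE_def by (simp add: nn_integral_add)
      finally show ?thesis .
    qed
    have Dsplit: "(\<integral>\<^sup>+x. indicator {d<..} x * ennreal (rE x * exp (gamma * x)) \<partial>lborel)
        = D + ennreal (q * (E * exp (gamma * d)) * exp (- lam * d))"
    proof -
      have "(\<integral>\<^sup>+x. indicator {d<..} x * ennreal (rE x * exp (gamma * x)) \<partial>lborel)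
        = (\<integral>\<^sup>+x. indicator {d<..} x * ennreal (rE x * (exp (gamma * x) - exp (gamma * d)))
          + indicator {d<..} x * ennreal (q * lam * exp (- lam * x) * (E * exp (gamma * d))) \<partial>lborel)"
      proof (intro nn_integral_cong)
        fix x :: real
        show "indicator {d<..} x * ennreal (rE x * exp (gamma * x))
          = indicator {d<..} x * ennreal (rE x * (exp (gamma * x) - exp (gamma * d)))
          + indicator {d<..} x * ennreal (q * lam * exp (- lam * x) * (E * exp (gamma * d)))"
        proof (cases "d < x")
          case True
          have "0 \<le> rE x * (exp (gamma * x) - exp (gamma * d))"
            using rE0[of x] True g by (intro mult_nonneg_nonneg) auto
          have eq2: "q * lam * exp (- lam * x) * (E * exp (gamma * d)) = rE x * exp (gamma * d)"
            unfolding rE_def by simp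
          have "ennreal (rE x * (exp (gamma * x) - exp (gamma * d)))
              + ennreal (rE x * exp (gamma * d))
              = ennreal (rE x * exp (gamma * x))"
            using rE0[of x] g \<open>0 \<le> rE x * (exp (gamma * x) - exp (gamma * d))\<close>
            by (simp add: ennreal_plus[symmetric] algebra_simps del: ennreal_plus)
          then show ?thesis unfolding eq2 using True by simp
        qed simp
      qed
      also have "\<dots> = D + (\<integral>\<^sup>+x. indicator {d<..} x * ennreal (q * lam * exp (- lam * x) * (E * exp (gamma * d))) \<partial>lborel)"
        unfolding D_def rE_def by (simp add: nn_integral_add)
      also have "(\<integral>\<^sup>+x. indicator {d<..} x * ennreal (q * lam * exp (- lam * x) * (E * exp (gamma * d))) \<partial>lborel)
          = ennreal (q * (E * exp (gamma * d)) * exp (- lam * d))"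
        by (rule nn_rho_const) (use q lam Epos in auto)
      finally show ?thesis .
    qed
    have HIeq: "HI = ennreal (exp (gamma * p)) * Jd"
    proof -
      have "HI = (\<integral>\<^sup>+x. ennreal (exp (gamma * p)) * (indicator {0<..} x * ennreal (rE x * exp (gamma * min x d))) \<partial>lborel)"
        unfolding HI_def
      proof (intro nn_integral_cong)
        fix x :: real
        have e: "- gamma * (w - x + I x - p) = gamma * p + (- gamma * w + gamma * min x d)"
          unfolding I_def by (auto simp: max_def min_def algebra_simps)
        have "q * lam * exp (- lam * x) * (exp (- gamma * (w - x + I x - p)) / gamma)
            = exp (gamma * p) * (rE x * exp (gamma * min x d))"
          unfolding e exp_add rE_def E_def by (simp add: algebra_simps)
        then show "indicator {0<..} x * ennreal (q * lam * exp (- lam * x) * (exp (- gamma * (w - x + I x - p)) / gamma))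
          = ennreal (exp (gamma * p)) * (indicator {0<..} x * ennreal (rE x * exp (gamma * min x d)))"
          using rE0[of x] by (simp add: ennreal_mult mult_ac)
      qed
      also have "\<dots> = ennreal (exp (gamma * p)) * Jd" unfolding Jd_def
        by (rule nn_integral_cmult) (simp add: rE_def)
      finally show ?thesis .
    qed
    have "Jd \<le> H0" unfolding H0split by simp
    then obtain jd where jd: "Jd = ennreal jd" "0 \<le> jd" using H0v by (cases Jd) (auto simp: top_unique)
    have "D \<le> H0" unfolding H0split by simp
    then obtain dd where dd: "D = ennreal dd" "0 \<le> dd" using H0v by (cases D) (auto simp: top_unique)
    have s1: "jd + dd = q * lam * E / (lam - gamma)"
    proof -
      have "ennreal (jd + dd) = ennreal (q * lam * E / (lam - gamma))"
        using H0split H0v jd dd by (simp add: ennreal_plus)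
      then show ?thesis using jd dd q lam Epos gl by (subst (asm) ennreal_inj) auto
    qed
    have s2: "dd + q * (E * exp (gamma * d)) * exp (- lam * d) = q * lam * E * (exp (- (lam - gamma) * d) / (lam - gamma))"
    proof -
      have "ennreal (dd + q * (E * exp (gamma * d)) * exp (- lam * d)) = ennreal (q * lam * E * (exp (- (lam - gamma) * d) / (lam - gamma)))"
        using Dsplit Rb[of d] dd q Epos by (simp add: ennreal_plus)
      then show ?thesis using dd q lam Epos gl by (subst (asm) ennreal_inj) auto
    qed
    have ed': "exp (gamma * d) = A * beta * exp (gamma * beta) * (lam - gamma) / q + 1"
      using ed unfolding M_def .
    have key: "(exp (gamma * p) - 1) * ((1 - q) * E + jd) < dd"
      by (rule final_arith[OF Epos q g gl jd(2) s1 s2 pb d[THEN less_imp_le] beta A_def ed'])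
    have "EU u w kt q lam (\<lambda>x. 0) < EU u w kt q lam I"
    proof -
      have "EU u w kt q lam (\<lambda>x. 0) = ereal ((1 - q) * (K - E) + q * K - (jd + dd))"
        unfolding EU0 H0split jd dd using jd dd by (simp add: ennreal_plus[symmetric] del: ennreal_plus)
      moreover have "EU u w kt q lam I = ereal ((1 - q) * (K - E * exp (gamma * p)) + q * K - exp (gamma * p) * jd)"
        unfolding EUI HIeq jd using jd by (simp add: ennreal_mult[symmetric] del: ennreal_mult)
      moreover have "(1 - q) * (K - E) + q * K - (jd + dd) < (1 - q) * (K - E * exp (gamma * p)) + q * K - exp (gamma * p) * jd"
        using key by (simp add: algebra_simps)
      ultimately show ?thesis by simp
    qed
    then show ?thesis using IIc unfolding kt_def by blast
  qed
qed

end
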